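(* Let $\alpha_a$ be a labeled dGL hybrid game, $S$ an inductive Angelic subvalue map for $\alpha_a$, and $\varphi$ a formula compatible with $S$ (i.e. $\models S(\mathsf{end})\rightarrow\varphi$). Then every state satisfying $S(a)$ satisfies $\langle\mathcal{U}(\alpha_a,S)\rangle\varphi$.
   Context: Differential game logic (dGL). Hybrid games are generated by $\alpha,\beta ::= x:=e \mid \alpha;\beta \mid ?Q \mid \{x'=f(x)\,\&\,Q\} \mid \alpha^{*} \mid \alpha\cup\beta \mid x:=* \mid\ !Q \mid \{x'=f(x)\,\&\,Q\}^{d} \mid \alpha^{\times} \mid \alpha\cap\beta \mid x:=\otimes$, with $x$ a real variable (vector for ODEs), $e,f(x)$ polynomial terms, $Q$ a formula. Players Angel and Demon: $x:=e$ deterministic assignment; in $x:=*$ Angel (in $x:=\otimes$ Demon) assigns any real; in $\{x'=f(x)\&Q\}$ Angel (in $\{\cdot\}^d$ Demon) chooses a duration $r\ge 0$ of following the ODE with $Q$ true throughout; $?Q$ makes Angel lose and $!Q$ makes Demon lose if $Q$ is false; in $\alpha\cup\beta$ Angel (in $\alpha\cap\beta$ Demon) chooses the branch; in $\alpha^*$ Angel (in $\alpha^\times$ Demon) decides before each iteration whether to repeat or stop; $\alpha;\beta$ sequential. Formulas: polynomial (in)equalities closed under connectives, real quantifiers, and modalities $\langle\alpha\rangle\varphi$ (Angel can win $\alpha$ reaching $\varphi$) and $[\alpha]\varphi\equiv\neg\langle\alpha\rangle\neg\varphi$, with the standard dGL winning-region semantics ($\langle x:=*\rangle\varphi\leftrightarrow\exists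 x\varphi$, $\langle x:=\otimes\rangle\varphi\leftrightarrow\forall x\varphi$, $\langle ?Q\rangle\varphi\leftrightarrow Q\wedge\varphi$, $\langle !Q\rangle\varphi\leftrightarrow(Q\rightarrow\varphi)$, $\cup$ as disjunction, $\cap$ as conjunction, $\langle\alpha;\beta\rangle\varphi\leftrightarrow\langle\alpha\rangle\langle\beta\rangle\varphi$, Angel ODE existential, Demon ODE universal, $\langle\alpha^*\rangle$ least and $\langle\alpha^\times\rangle$ greatest fixed point). $\models$ denotes validity. Labels: every node of the syntax tree carries a unique label; $\alpha_a$ has root label $a$; $\mathrm{nodes}(\alpha_a)$ is its set of subgame labels; $\mathsf{end}$ is a special extra label. A map $S$ assigns formulas to a label set containing $\mathrm{nodes}(\alpha_a)\cup\{\mathsf{end}\}$; $S\{\mathsf{end}\mapsto Q\}$ replaces the value at $\mathsf{end}$. $\gamma_g,\delta_d$ denote immediate subgames with root labels $g,d$. Existential projection $\mathcal{P}(\alpha_a,S)$: $(x:=* )_a\mapsto(x:=* )_a;?S(\mathsf{end})$; $\{x'=f(x)\&Q\}_a\mapsto\{x'=f(x)\&Q\}_a;?S(\mathsf{end})$; $(\gamma_g\cup\delta_d)_a\mapsto(?S(g);\mathcal{P}(\gamma_g,S))\cup(?S(d);\mathcal{P}(\delta_d,S))$; $((\gamma_g)^* )_a\mapsto(?S(g);\mathcal{P}(\gamma_g,S\{\mathsf{end}\mapsto S(a)\}))^*;?S(\mathsf{end})$; $(\gamma_g;\delta_d)_a\mapsto\mathcal{P}(\gamma_g,S\{\mathsf{end}\mapsto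 S(d)\});\mathcal{P}(\delta_d,S)$; $(\gamma_g\cap\delta_d)_a\mapsto\mathcal{P}(\gamma_g,S)\cap\mathcal{P}(\delta_d,S)$; $((\gamma_g)^\times)_a\mapsto\mathcal{P}(\gamma_g,S\{\mathsf{end}\mapsto S(a)\})^\times$; $x:=e,x:=\otimes,?Q,!Q,\{x'=f(x)\&Q\}^d$ unchanged (labels preserved, new nodes fresh labels). Universal projection $\mathcal{U}(\alpha_a,S)$: $(x:=* )_a\mapsto (x:=\otimes)_a;\,!S(\mathsf{end})$; $\{x'=f(x)\&Q\}_a\mapsto(\{x'=f(x)\&Q\}^d)_a;\,!S(\mathsf{end})$; $(\gamma_g\cup\delta_d)_a\mapsto(!S(g);\mathcal{U}(\gamma_g,S))\cap(!S(d);\mathcal{U}(\delta_d,S))$; $((\gamma_g)^* )_a\mapsto(!S(g);\mathcal{U}(\gamma_g,S\{\mathsf{end}\mapsto S(a)\}))^{\times};\,!S(\mathsf{end})$; $(\gamma_g;\delta_d)_a\mapsto\mathcal{U}(\gamma_g,S\{\mathsf{end}\mapsto S(d)\});\mathcal{U}(\delta_d,S)$; $(\gamma_g\cap\delta_d)_a\mapsto\mathcal{U}(\gamma_g,S)\cap\mathcal{U}(\delta_d,S)$; $((\gamma_g)^\times)_a\mapsto\mathcal{U}(\gamma_g,S\{\mathsf{end}\mapsto S(a)\})^\times$; $x:=e,x:=\otimes,?Q,!Q,\{x'=f(x)\&Q\}^d$ unchanged (labels preserved, new nodes fresh labels). Inductive Angelic subvalue map ($S\Vdash\alpha_a$), recursively: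 atomic $\alpha$ ($x:=e,x:=*,x:=\otimes,?Q,!Q$, Angel or Demon ODE): $\models S(a)\rightarrow\langle\alpha\rangle S(\mathsf{end})$; $(\gamma_g\cup\delta_d)_a$: $\models S(a)\rightarrow S(g)\vee S(d)$, $S\Vdash\gamma_g$, $S\Vdash\delta_d$; $(\gamma_g\cap\delta_d)_a$: $\models S(a)\rightarrow S(g)\wedge S(d)$ and both; $(\gamma_g;\delta_d)_a$: $\models S(a)\rightarrow S(g)$, $S\{\mathsf{end}\mapsto S(d)\}\Vdash\gamma_g$, $S\Vdash\delta_d$; $((\gamma_g)^* )_a$: $\models S(a)\rightarrow\langle\mathcal{P}(\alpha_a,S)\rangle S(\mathsf{end})$ and $S\{\mathsf{end}\mapsto S(a)\}\Vdash\gamma_g$; $((\gamma_g)^\times)_a$: $\models S(a)\rightarrow S(g)\wedge S(\mathsf{end})$ and $S\{\mathsf{end}\mapsto S(a)\}\Vdash\gamma_g$. *)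

theory Defs
  imports Complex_Main
begin

type_synonym var = nat
type_synonym state = "var \<Rightarrow> real"

datatype trm =
    Var var
  | Const real
  | Neg trm
  | Plus trm trm
  | Times trm trm

datatype fml =
    FTrue
  | FFalse
  | Eq trm trm
  | Leq trm trm
  | Less trm trm
  | FNot fml
  | FAnd fml fml
  | FOr fml fml
  | FImp fml fml
  | FEx var fml
  | FAll var fml
  | Dia game fml
and game =
    Assign var trm
  | AssignAny var
  | AssignDemon var
  | Test fml
  | Assert fml
  | ODE "(var \<times> trm) list" fml
  | ODED "(var \<times> trm) list" fml
  | Seq game game
  | Choice game game
  | DChoice game game
  | Star game
  | Cross game

definition Box :: "game \<Rightarrow> fml \<Rightarrow> fml" where
  "Box a p = FNot (Dia a (FNot p))"

fun tsem :: "trm \<Rightarrow> state \<Rightarrow> real" where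
  "tsem (Var x) w = w x"
| "tsem (Const c) w = c"
| "tsem (Neg e) w = - tsem e w"
| "tsem (Plus e1 e2) w = tsem e1 w + tsem e2 w"
| "tsem (Times e1 e2) w = tsem e1 w * tsem e2 w"

definition ode_sol ::
  "(var \<times> trm) list \<Rightarrow> state set \<Rightarrow> state \<Rightarrow> real \<Rightarrow> (real \<Rightarrow> state) \<Rightarrow> bool" where
  "ode_sol xs P w r F \<longleftrightarrow>
     0 \<le> r \<and> F 0 = w \<and>
     (\<forall>t\<in>{0..r}. \<forall>y. y \<notin> fst ` set xs \<longrightarrow> F t y = w y) \<and>
     (\<forall>(x, e)\<in>set xs. \<forall>t\<in>{0..r}.
        ((\<lambda>s. F s x) has_real_derivative tsem e (F t)) (at t within {0..r})) \<and>
     (\<forall>t\<in>{0..r}. F t \<in> P)"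

fun fsem :: "fml \<Rightarrow> state set"
and gsem :: "game \<Rightarrow> state set \<Rightarrow> state set" where
  "fsem FTrue = UNIV"
| "fsem FFalse = {}"
| "fsem (Eq e1 e2) = {w. tsem e1 w = tsem e2 w}"
| "fsem (Leq e1 e2) = {w. tsem e1 w \<le> tsem e2 w}"
| "fsem (Less e1 e2) = {w. tsem e1 w < tsem e2 w}"
| "fsem (FNot p) = - fsem p"
| "fsem (FAnd p q) = fsem p \<inter> fsem q"
| "fsem (FOr p q) = fsem p \<union> fsem q"
| "fsem (FImp p q) = - fsem p \<union> fsem q"
| "fsem (FEx x p) = {w. \<exists>v. w(x := v) \<in> fsem p}"
| "fsem (FAll x p) = {w. \<forall>v. w(x := v) \<in> fsem p}"
| "fsem (Dia a p) = gsem a (fsem p)"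
| "gsem (Assign x e) X = {w. w(x := tsem e w) \<in> X}"
| "gsem (AssignAny x) X = {w. \<exists>v. w(x := v) \<in> X}"
| "gsem (AssignDemon x) X = {w. \<forall>v. w(x := v) \<in> X}"
| "gsem (Test q) X = fsem q \<inter> X"
| "gsem (Assert q) X = - fsem q \<union> X"
| "gsem (ODE xs q) X = {w. \<exists>r F. ode_sol xs (fsem q) w r F \<and> F r \<in> X}"
| "gsem (ODED xs q) X = {w. \<forall>r F. ode_sol xs (fsem q) w r F \<longrightarrow> F r \<in> X}"
| "gsem (Seq a b) X = gsem a (gsem b X)"
| "gsem (Choice a b) X = gsem a X \<union> gsem b X"
| "gsem (DChoice a b) X = gsem a X \<inter> gsem b X"
| "gsem (Star a) X = lfp (\<lambda>Z. X \<union> gsem a Z)"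
| "gsem (Cross a) X = gfp (\<lambda>Z. X \<inter> gsem a Z)"

definition valid :: "fml \<Rightarrow> bool" where
  "valid p \<longleftrightarrow> (\<forall>w. w \<in> fsem p)"

datatype lgame =
    LAssign nat var trm
  | LAssignAny nat var
  | LAssignDemon nat var
  | LTest nat fml
  | LAssert nat fml
  | LODE nat "(var \<times> trm) list" fml
  | LODED nat "(var \<times> trm) list" fml
  | LSeq nat lgame lgame
  | LChoice nat lgame lgame
  | LDChoice nat lgame lgame
  | LStar nat lgame
  | LCross nat lgame

datatype lbl = L nat | End

fun root :: "lgame \<Rightarrow> nat" where
  "root (LAssign a _ _) = a"
| "root (LAssignAny a _) = a"
| "root (LAssignDemon a _) = a"
| "root (LTest a _) = a"
| "root (LAssert a _) = a"
| "root (LODE a _ _) = a"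
| "root (LODED a _ _) = a"
| "root (LSeq a _ _) = a"
| "root (LChoice a _ _) = a"
| "root (LDChoice a _ _) = a"
| "root (LStar a _) = a"
| "root (LCross a _) = a"

fun nodes :: "lgame \<Rightarrow> nat list" where
  "nodes (LSeq a g d) = a # nodes g @ nodes d"
| "nodes (LChoice a g d) = a # nodes g @ nodes d"
| "nodes (LDChoice a g d) = a # nodes g @ nodes d"
| "nodes (LStar a g) = a # nodes g"
| "nodes (LCross a g) = a # nodes g"
| "nodes g = [root g]"

fun erase :: "lgame \<Rightarrow> game" where
  "erase (LAssign _ x e) = Assign x e"
| "erase (LAssignAny _ x) = AssignAny x"
| "erase (LAssignDemon _ x) = AssignDemon x"
| "erase (LTest _ q) = Test q"
| "erase (LAssert _ q) = Assert q"
| "erase (LODE _ xs q) = ODE xs q"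
| "erase (LODED _ xs q) = ODED xs q"
| "erase (LSeq _ g d) = Seq (erase g) (erase d)"
| "erase (LChoice _ g d) = Choice (erase g) (erase d)"
| "erase (LDChoice _ g d) = DChoice (erase g) (erase d)"
| "erase (LStar _ g) = Star (erase g)"
| "erase (LCross _ g) = Cross (erase g)"

type_synonym smap = "lbl \<Rightarrow> fml"

text \<open>Existential projection \<open>\<P>(\<alpha>_a, S)\<close> (labels of the result are irrelevant to
  its semantics and are therefore erased).\<close>
fun eproj :: "lgame \<Rightarrow> smap \<Rightarrow> game" where
  "eproj (LAssignAny a x) S = Seq (AssignAny x) (Test (S End))"
| "eproj (LODE a xs q) S = Seq (ODE xs q) (Test (S End))"
| "eproj (LChoice a g d) S =
     Choice (Seq (Test (S (L (root g)))) (eproj g S))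
            (Seq (Test (S (L (root d)))) (eproj d S))"
| "eproj (LStar a g) S =
     Seq (Star (Seq (Test (S (L (root g)))) (eproj g (S(End := S (L a)))))) (Test (S End))"
| "eproj (LSeq a g d) S = Seq (eproj g (S(End := S (L (root d))))) (eproj d S)"
| "eproj (LDChoice a g d) S = DChoice (eproj g S) (eproj d S)"
| "eproj (LCross a g) S = Cross (eproj g (S(End := S (L a))))"
| "eproj (LAssign a x e) S = Assign x e"
| "eproj (LAssignDemon a x) S = AssignDemon x"
| "eproj (LTest a q) S = Test q"
| "eproj (LAssert a q) S = Assert q"
| "eproj (LODED a xs q) S = ODED xs q"

fun uproj :: "lgame \<Rightarrow> smap \<Rightarrow> game" where
  "uproj (LAssignAny a x) S = Seq (AssignDemon x) (Assert (S End))"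
| "uproj (LODE a xs q) S = Seq (ODED xs q) (Assert (S End))"
| "uproj (LChoice a g d) S =
     DChoice (Seq (Assert (S (L (root g)))) (uproj g S))
             (Seq (Assert (S (L (root d)))) (uproj d S))"
| "uproj (LStar a g) S =
     Seq (Cross (Seq (Assert (S (L (root g)))) (uproj g (S(End := S (L a)))))) (Assert (S End))"
| "uproj (LSeq a g d) S = Seq (uproj g (S(End := S (L (root d))))) (uproj d S)"
| "uproj (LDChoice a g d) S = DChoice (uproj g S) (uproj d S)"
| "uproj (LCross a g) S = Cross (uproj g (S(End := S (L a))))"
| "uproj (LAssign a x e) S = Assign x e"
| "uproj (LAssignDemon a x) S = AssignDemon x"
| "uproj (LTest a q) S = Test q"
| "uproj (LAssert a q) S = Assert q"
| "uproj (LODED a xs q) S = ODED xs q"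

fun subval :: "smap \<Rightarrow> lgame \<Rightarrow> bool" where
  "subval S (LChoice a g d) \<longleftrightarrow>
     valid (FImp (S (L a)) (FOr (S (L (root g))) (S (L (root d))))) \<and> subval S g \<and> subval S d"
| "subval S (LDChoice a g d) \<longleftrightarrow>
     valid (FImp (S (L a)) (FAnd (S (L (root g))) (S (L (root d))))) \<and> subval S g \<and> subval S d"
| "subval S (LSeq a g d) \<longleftrightarrow>
     valid (FImp (S (L a)) (S (L (root g)))) \<and>
     subval (S(End := S (L (root d)))) g \<and> subval S d"
| "subval S (LStar a g) \<longleftrightarrow>
     valid (FImp (S (L a)) (Dia (eproj (LStar a g) S) (S End))) \<and>
     subval (S(End := S (L a))) g"
| "subval S (LCross a g) \<longleftrightarrow>
     valid (FImp (S (L a)) (FAnd (S (L (root g))) (S End))) \<and>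
     subval (S(End := S (L a))) g"
| "subval S g \<longleftrightarrow> valid (FImp (S (L (root g))) (Dia (erase g) (S End)))"

end

theory Submission
  imports Defs
begin
lemma gsem_mono: "X \<subseteq> Y \<Longrightarrow> gsem a X \<subseteq> gsem a Y"
proof (induction a arbitrary: X Y)
  case (Star a)
  have "\<And>Z. X \<union> gsem a Z \<subseteq> Y \<union> gsem a Z" using Star.prems by blast
  then show ?case by (simp add: lfp_mono)
next
  case (Cross a)
  have "\<And>Z. X \<inter> gsem a Z \<subseteq> Y \<inter> gsem a Z" using Cross.prems by blast
  then show ?case by (simp add: gfp_mono)
next
  case (Seq a b) then show ?case by simp
next
  case (Choice a b) then show ?case by (simp only: gsem.simps, intro Un_mono) auto
next
  case (DChoice a b) then show ?case by (simp only: gsem.simps, intro Int_mono) auto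
qed (force simp: subset_iff)+
lemma main_aux:
  "subval S \<alpha> \<Longrightarrow> valid (FImp (S End) \<phi>) \<Longrightarrow>
   fsem (S (L (root \<alpha>))) \<subseteq> gsem (uproj \<alpha> S) (fsem \<phi>)"
proof (induction \<alpha> arbitrary: S \<phi>)
  case (LAssign x1 x2 x3)
  then show ?case by (auto simp: valid_def)
next
  case (LAssignAny x1 x2)
  then show ?case by (auto simp: valid_def)
next
  case (LAssignDemon x1 x2)
  then show ?case by (auto simp: valid_def)
next
  case (LTest x1 x2)
  then show ?case by (auto simp: valid_def)
next
  case (LAssert x1 x2)
  then show ?case by (auto simp: valid_def)
next
  case (LODE x1 x2 x3)
  then show ?case by (auto simp: valid_def)
next
  case (LODED x1 x2 x3)
  then show ?case using gsem_mono[of "fsem (S End)" "fsem \<phi>" "ODED x2 x3"]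
    by (auto simp: valid_def)
next
  case (LSeq a g d)
  let ?S' = "S(End := S (L (root d)))"
  have d: "fsem (S (L (root d))) \<subseteq> gsem (uproj d S) (fsem \<phi>)"
    using LSeq by simp
  have v: "valid (FImp (?S' End) (Dia (uproj d S) \<phi>))"
    using d by (auto simp: valid_def)
  have g: "fsem (?S' (L (root g))) \<subseteq> gsem (uproj g ?S') (fsem (Dia (uproj d S) \<phi>))"
  proof -
    have sg: "subval ?S' g" using LSeq.prems by simp
    show ?thesis by (rule LSeq.IH(1)[OF sg v])
  qed
  show ?case using g LSeq.prems by (auto simp: valid_def)
next
  case (LChoice a g d)
  have g: "fsem (S (L (root g))) \<subseteq> gsem (uproj g S) (fsem \<phi>)"
    using LChoice by simp
  have d: "fsem (S (L (root d))) \<subseteq> gsem (uproj d S) (fsem \<phi>)"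
    using LChoice by simp
  show ?case using g d by auto
next
  case (LDChoice a g d)
  have g: "fsem (S (L (root g))) \<subseteq> gsem (uproj g S) (fsem \<phi>)"
    using LDChoice by simp
  have d: "fsem (S (L (root d))) \<subseteq> gsem (uproj d S) (fsem \<phi>)"
    using LDChoice by simp
  show ?case using g d LDChoice.prems by (auto simp: valid_def)
next
  case (LStar a g)
  let ?S' = "S(End := S (L a))"
  have v: "valid (FImp (?S' End) (S (L a)))" by (simp add: valid_def)
  have g: "fsem (?S' (L (root g))) \<subseteq> gsem (uproj g ?S') (fsem (S (L a)))"
  proof -
    have sg: "subval ?S' g" using LStar.prems by simp
    show ?thesis by (rule LStar.IH[OF sg v])
  qed
  let ?f = "\<lambda>Z. (- fsem (S End) \<union> fsem \<phi>) \<inter>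
     gsem (Seq (Assert (S (L (root g)))) (uproj g ?S')) Z"
  have "fsem (S (L a)) \<subseteq> ?f (fsem (S (L a)))"
    using g LStar.prems by (auto simp: valid_def)
  then have "fsem (S (L a)) \<subseteq> gfp ?f" by (rule gfp_upperbound)
  moreover have "- fsem (S End) \<union> fsem \<phi> = UNIV" using LStar.prems by (auto simp: valid_def)
  ultimately show ?case by simp
next
  case (LCross a g)
  let ?S' = "S(End := S (L a))"
  have v: "valid (FImp (?S' End) (S (L a)))" by (simp add: valid_def)
  have g: "fsem (?S' (L (root g))) \<subseteq> gsem (uproj g ?S') (fsem (S (L a)))"
  proof -
    have sg: "subval ?S' g" using LCross.prems by simp
    show ?thesis by (rule LCross.IH[OF sg v])
  qed
  let ?f = "\<lambda>Z. fsem \<phi> \<inter> gsem (uproj g ?S') Z"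
  have "fsem (S (L a)) \<subseteq> ?f (fsem (S (L a)))"
    using g LCross.prems by (auto simp: valid_def)
  then have "fsem (S (L a)) \<subseteq> gfp ?f" by (rule gfp_upperbound)
  then show ?case by simp
qed

theorem mainTheorem10:
  fixes \<alpha> :: lgame and S :: smap and \<phi> :: fml
  assumes "distinct (nodes \<alpha>)"
    and "subval S \<alpha>"
    and "valid (FImp (S End) \<phi>)"
  shows "\<forall>w. w \<in> fsem (S (L (root \<alpha>))) \<longrightarrow> w \<in> fsem (Dia (uproj \<alpha> S) \<phi>)"
  using main_aux[OF assms(2,3)] by auto

end
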